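(* Let $h\in C[0,1]$ and $q\in C[0,1]$ with $q>0$ on $(0,1)$. Let $(c_n)_n\subset\mathbb R$ with $c_n\to c\in\mathbb R$, and for each $n$ let $z_n\in C[0,1]\cap C^1(0,1)$ satisfy $\dot z_n(\varphi)=h(\varphi)-c_n-q(\varphi)/z_n(\varphi)$ and $z_n(\varphi)<0$ for $\varphi\in(0,1)$. Suppose either (a) $(z_n)_n$ is pointwise increasing in $n$ and there is $v\in C[0,1]$ with $z_n(\varphi)\le v(\varphi)<0$ for all $n$ and $\varphi\in(0,1)$; or (b) $(z_n)_n$ is pointwise decreasing in $n$ and there is $w\in C[0,1]$ with $z_n(\varphi)\ge w(\varphi)$ for all $n$ and $\varphi\in(0,1)$. Then $z_n$ converges uniformly on $[0,1]$ to some $\bar z\in C[0,1]\cap C^1(0,1)$ satisfying $\dot{\bar z}(\varphi)=h(\varphi)-c-q(\varphi)/\bar z(\varphi)$ and $\bar z(\varphi)<0$ for $\varphi\in(0,1)$. *)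

theory Defs
  imports "HOL-Analysis.Analysis"
begin

end

theory Submission
  imports Defs "HOL-Analysis.Analysis"
begin

lemma ext01:
  fixes f g :: "real \<Rightarrow> real"
  assumes "continuous_on {0..1} f" "continuous_on {0..1} g"
    and "\<And>x. x \<in> {0<..<1} \<Longrightarrow> f x \<le> g x" and "x \<in> {0..1}"
  shows "f x \<le> g x"
proof -
  have c: "continuous_on (closure {0<..<1::real}) (\<lambda>x. f x - g x)"
    using assms(1,2) by (simp add: continuous_on_diff)
  have "f x - g x \<le> 0"
    by (rule continuous_le_on_closure[OF c]) (use assms(3,4) in auto)
  thus ?thesis by simp
qed

lemma bound01:
  fixes f :: "real \<Rightarrow> real"
  assumes "continuous_on {0..1} f"
  shows "\<exists>B\<ge>0. \<forall>x\<in>{0..1}. \<bar>f x\<bar> \<le> B"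
proof -
  have "bounded (f ` {0..1})"
    using compact_continuous_image[OF assms] compact_imp_bounded by blast
  then obtain B where "\<forall>y\<in>f ` {0..1}. norm y \<le> B" by (auto simp: bounded_iff)
  hence "\<forall>x\<in>{0..1}. \<bar>f x\<bar> \<le> B" by auto
  moreover have "B \<ge> 0" using \<open>\<forall>x\<in>{0..1}. \<bar>f x\<bar> \<le> B\<close> by (metis abs_ge_zero atLeastAtMost_iff order_trans zero_le_one order.refl)
  ultimately show ?thesis by blast
qed

lemma sq_mod:
  fixes a b :: real
  assumes "a \<le> 0" "b \<le> 0"
  shows "\<bar>a - b\<bar> \<le> sqrt \<bar>a^2 - b^2\<bar>"
proof (rule real_le_rsqrt)
  have "\<bar>a - b\<bar> \<le> \<bar>a + b\<bar>" using assms by auto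
  hence "\<bar>a - b\<bar> * \<bar>a - b\<bar> \<le> \<bar>a - b\<bar> * \<bar>a + b\<bar>" by (intro mult_left_mono) auto
  also have "\<dots> = \<bar>a^2 - b^2\<bar>" by (simp add: abs_mult[symmetric] power2_eq_square algebra_simps)
  finally show "\<bar>a - b\<bar>^2 \<le> \<bar>a^2 - b^2\<bar>" by (simp only: power2_eq_square)
qed

lemma has_real_derivative_sequence:
  fixes S :: "real set"
  assumes cvs: "convex S"
      and df:  "\<And>n x. x \<in> S \<Longrightarrow> (f n has_field_derivative f' n x) (at x within S)"
      and conv: "\<And>e. 0 < e \<Longrightarrow> \<exists>N. \<forall>n x. n \<ge> N \<longrightarrow> x \<in> S \<longrightarrow> norm (f' n x - g' x) \<le> e"
      and "\<exists>x l. x \<in> S \<and> ((\<lambda>n. f n x) \<longlongrightarrow> l) sequentially"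
    shows "\<exists>g. \<forall>x \<in> S. ((\<lambda>n. f n x) \<longlongrightarrow> g x) sequentially \<and>
                       (g has_field_derivative (g' x)) (at x within S)"
proof -
  from assms obtain x l where x: "x \<in> S" and tf: "((\<lambda>n. f n x) \<longlongrightarrow> l) sequentially"
    by blast
  show ?thesis
    unfolding has_field_derivative_def
  proof (rule has_derivative_sequence [OF cvs _ _ x])
    show "(\<lambda>n. f n x) \<longlonglongrightarrow> l"
      by (rule tf)
  next 
    have **: "\<exists>N. \<forall>n\<ge>N. \<forall>x\<in>S. \<forall>h. norm (f' n x * h - g' x * h) \<le> \<epsilon> * norm h"
      if "\<epsilon> > 0" for \<epsilon>::real 
      by (metis that left_diff_distrib mult_right_mono norm_ge_zero norm_mult conv)
    show "\<And>e. e > 0 \<Longrightarrow> \<forall>\<^sub>F n in sequentially. \<forall>x\<in>S. \<forall>h. norm (f' n x * h - g' x * h) \<le> e * norm h"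
      unfolding eventually_sequentially by (blast intro: **)
  qed (metis has_field_derivative_def df)
qed

theorem lemma3p3:
  fixes h q :: "real \<Rightarrow> real" and c :: "nat \<Rightarrow> real" and c0 :: real
    and z :: "nat \<Rightarrow> real \<Rightarrow> real"
  assumes h_cont: "continuous_on {0..1} h"
    and q_cont: "continuous_on {0..1} q"
    and q_pos: "\<And>x. x \<in> {0<..<1} \<Longrightarrow> q x > 0"
    and c_lim: "c \<longlonglongrightarrow> c0"
    and z_cont: "\<And>n. continuous_on {0..1} (z n)"
    and z_C1: "\<And>n. z n differentiable_on {0<..<1} \<and> continuous_on {0<..<1} (deriv (z n))"
    and z_ode: "\<And>n x. x \<in> {0<..<1} \<Longrightarrow>
                 (z n has_real_derivative (h x - c n - q x / z n x)) (at x)"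
    and z_neg: "\<And>n x. x \<in> {0<..<1} \<Longrightarrow> z n x < 0"
    and cases: "(\<exists>v. continuous_on {0..1} v \<and>
                   (\<forall>n. \<forall>x\<in>{0<..<1}. z n x \<le> z (Suc n) x) \<and>
                   (\<forall>n. \<forall>x\<in>{0<..<1}. z n x \<le> v x \<and> v x < 0))
              \<or> (\<exists>w. continuous_on {0..1} w \<and>
                   (\<forall>n. \<forall>x\<in>{0<..<1}. z (Suc n) x \<le> z n x) \<and>
                   (\<forall>n. \<forall>x\<in>{0<..<1}. w x \<le> z n x))"
  shows "\<exists>zb. uniform_limit {0..1} z zb sequentially
            \<and> continuous_on {0..1} zb
            \<and> zb differentiable_on {0<..<1} \<and> continuous_on {0<..<1} (deriv zb)
            \<and> (\<forall>x\<in>{0<..<1}. (zb has_real_derivative (h x - c0 - q x / zb x)) (at x))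
            \<and> (\<forall>x\<in>{0<..<1}. zb x < 0)"
proof -
  have zle0: "z n x \<le> 0" if "x \<in> {0..1}" for n x
    by (rule ext01[OF z_cont continuous_on_const, of n 0 x]) (use z_neg that in \<open>auto intro: less_imp_le\<close>)
  obtain lo up where lo_c: "continuous_on {0..1} lo" and up_c: "continuous_on {0..1} up"
    and up_neg: "\<And>x. x \<in> {0<..<1} \<Longrightarrow> up x < 0"
    and bnds: "\<And>n x. x \<in> {0..1} \<Longrightarrow> lo x \<le> z n x \<and> z n x \<le> up x"
    and mono: "\<And>x. x \<in> {0..1} \<Longrightarrow> monoseq (\<lambda>n. z n x)"
  proof (cases "\<exists>v. continuous_on {0..1} v \<and>
                   (\<forall>n. \<forall>x\<in>{0<..<1}. z n x \<le> z (Suc n) x) \<and>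
                   (\<forall>n. \<forall>x\<in>{0<..<1}. z n x \<le> v x \<and> v x < 0)")
    case True
    then obtain v where v: "continuous_on {0..1} v" "\<forall>n. \<forall>x\<in>{0<..<1}. z n x \<le> z (Suc n) x"
      "\<forall>n. \<forall>x\<in>{0<..<1}. z n x \<le> v x \<and> v x < 0" by blast
    have st: "z n x \<le> z (Suc n) x" if "x \<in> {0..1}" for n x
      using ext01[OF z_cont z_cont, of n "Suc n" x] v(2) that by blast
    have inc: "incseq (\<lambda>n. z n x)" if "x \<in> {0..1}" for x
      using st[OF that] by (simp add: incseq_Suc_iff)
    show ?thesis
    proof (rule that[of "z 0" v])
      show "continuous_on {0..1} (z 0)" by (rule z_cont)
      show "continuous_on {0..1} v" by (rule v(1))
      show "v x < 0" if "x \<in> {0<..<1}" for x using v(3) that by blast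
      show "z 0 x \<le> z n x \<and> z n x \<le> v x" if "x \<in> {0..1}" for n x
        using inc[OF that] ext01[OF z_cont v(1), of n x] v(3) that
        by (auto simp: incseq_def)
      show "monoseq (\<lambda>n. z n x)" if "x \<in> {0..1}" for x
        using inc[OF that] by (simp add: monoseq_iff)
    qed
  next
    case False
    then obtain w where w: "continuous_on {0..1} w" "\<forall>n. \<forall>x\<in>{0<..<1}. z (Suc n) x \<le> z n x"
      "\<forall>n. \<forall>x\<in>{0<..<1}. w x \<le> z n x" using cases by blast
    have st: "z (Suc n) x \<le> z n x" if "x \<in> {0..1}" for n x
      using ext01[OF z_cont z_cont, of "Suc n" n x] w(2) that by blast
    have dec: "decseq (\<lambda>n. z n x)" if "x \<in> {0..1}" for x
      using st[OF that] by (simp add: decseq_Suc_iff)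
    show ?thesis
    proof (rule that[of w "z 0"])
      show "continuous_on {0..1} (z 0)" by (rule z_cont)
      show "continuous_on {0..1} w" by (rule w(1))
      show "z 0 x < 0" if "x \<in> {0<..<1}" for x using z_neg that by blast
      show "w x \<le> z n x \<and> z n x \<le> z 0 x" if "x \<in> {0..1}" for n x
        using dec[OF that] ext01[OF w(1) z_cont, of n x] w(3) that
        by (auto simp: decseq_def)
      show "monoseq (\<lambda>n. z n x)" if "x \<in> {0..1}" for x
        using dec[OF that] by (simp add: monoseq_iff)
    qed
  qed
  obtain B1 where B1: "\<And>x. x \<in> {0..1} \<Longrightarrow> \<bar>lo x\<bar> \<le> B1" using bound01[OF lo_c] by blast
  obtain B2 where B2: "\<And>x. x \<in> {0..1} \<Longrightarrow> \<bar>up x\<bar> \<le> B2" using bound01[OF up_c] by blast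
  define B where "B = max B1 B2"
  have zB: "\<bar>z n x\<bar> \<le> B" if "x \<in> {0..1}" for n x
    using bnds[OF that, of n] B1[OF that] B2[OF that] unfolding B_def by linarith
  obtain H where H: "H \<ge> 0" "\<And>x. x \<in> {0..1} \<Longrightarrow> \<bar>h x\<bar> \<le> H" using bound01[OF h_cont] by blast
  obtain Q where Q: "Q \<ge> 0" "\<And>x. x \<in> {0..1} \<Longrightarrow> \<bar>q x\<bar> \<le> Q" using bound01[OF q_cont] by blast
  obtain C where C: "C > 0" "\<And>n. norm (c n) \<le> C"
    using convergent_imp_Bseq[OF convergentI[OF c_lim]] by (auto elim: BseqE)
  have B0: "B \<ge> 0" using zB[of 0 0] by auto
  define L where "L = 2 * B * (H + C) + 2 * Q"
  have L0: "L \<ge> 0" unfolding L_def using B0 H Q C by auto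
  have lip_lt: "\<bar>(z n y)^2 - (z n x)^2\<bar> \<le> L * \<bar>y - x\<bar>"
    if xy: "x \<in> {0..1}" "y \<in> {0..1}" "x < y" for n x y
  proof -
    have sub: "{x..y} \<subseteq> {0..1}" using xy by auto
    have dz: "((\<lambda>t. (z n t)^2) has_real_derivative (2 * z n t * (h t - c n - q t / z n t))) (at t)"
      if "t \<in> {0<..<1}" for t
      using DERIV_power[OF z_ode[OF that, of n], of 2] by (simp add: algebra_simps)
    have "continuous_on {x..y} (\<lambda>t. (z n t)^2)"
      by (intro continuous_on_power continuous_on_subset[OF z_cont sub])
    moreover have "(\<lambda>t. (z n t)^2) differentiable (at t)" if "x < t" "t < y" for t
      using dz[of t] that xy real_differentiable_def by fastforce
    ultimately obtain l t where t: "x < t" "t < y" "((\<lambda>t. (z n t)^2) has_real_derivative l) (at t)"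
      "(z n y)^2 - (z n x)^2 = (y - x) * l"
      using MVT[OF xy(3)] by blast
    have t01: "t \<in> {0<..<1}" using t xy by auto
    have l: "l = 2 * z n t * (h t - c n - q t / z n t)"
      using DERIV_unique[OF t(3) dz[OF t01]] .
    also have "\<dots> = 2 * z n t * (h t - c n) - 2 * q t"
      using z_neg[OF t01, of n] by (simp add: field_simps)
    finally have l2: "l = 2 * z n t * (h t - c n) - 2 * q t" .
    have "\<bar>z n t * (h t - c n)\<bar> \<le> B * (H + C)"
    proof -
      have "\<bar>h t - c n\<bar> \<le> H + C" using H(2)[of t] C(2)[of n] t01 by auto
      thus ?thesis unfolding abs_mult using zB[of t n] t01 B0
        by (intro mult_mono) auto
    qed
    hence "\<bar>l\<bar> \<le> L" unfolding l2 L_def using Q(2)[of t] t01 by auto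
    thus ?thesis using t(4) xy(3) by (simp add: abs_mult mult.commute mult_right_mono)
  qed
  have lip: "\<bar>(z n y)^2 - (z n x)^2\<bar> \<le> L * \<bar>y - x\<bar>"
    if xy: "x \<in> {0..1}" "y \<in> {0..1}" for n x y
  proof -
    consider "x < y" | "x = y" | "y < x" by linarith
    thus ?thesis
    proof cases
      case 3 thus ?thesis using lip_lt[OF xy(2,1) 3, of n] by (simp add: abs_minus_commute)
    qed (use lip_lt[OF xy] in auto)
  qed
  have zmod: "\<bar>z n y - z n x\<bar> \<le> sqrt (L * \<bar>y - x\<bar>)"
    if xy: "x \<in> {0..1}" "y \<in> {0..1}" for n x y
    using sq_mod[OF zle0[OF xy(2)] zle0[OF xy(1)], of n n] lip[OF xy, of n]
    by (meson order_trans real_sqrt_le_iff)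
  define zb where "zb x = lim (\<lambda>n. z n x)" for x
  have conv: "(\<lambda>n. z n x) \<longlonglongrightarrow> zb x" if "x \<in> {0..1}" for x
  proof -
    have "Bseq (\<lambda>n. z n x)" using zB[OF that] by (intro BseqI') auto
    hence "convergent (\<lambda>n. z n x)" using Bseq_monoseq_convergent mono[OF that] by blast
    thus ?thesis unfolding zb_def by (simp add: convergent_LIMSEQ_iff)
  qed
  have zbmod: "\<bar>zb y - zb x\<bar> \<le> sqrt (L * \<bar>y - x\<bar>)"
    if xy: "x \<in> {0..1}" "y \<in> {0..1}" for x y
  proof (rule LIMSEQ_le_const2)
    show "(\<lambda>n. \<bar>z n y - z n x\<bar>) \<longlonglongrightarrow> \<bar>zb y - zb x\<bar>"
      by (intro tendsto_intros conv xy)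
  qed (use zmod[OF xy] in auto)
  have small: "sqrt (L * \<bar>y - x\<bar>) < e" if "e > 0" "\<bar>y - x\<bar> < e^2 / (L + 1)" for x y e :: real
  proof -
    have "L * \<bar>y - x\<bar> \<le> (L + 1) * \<bar>y - x\<bar>" by (simp add: mult_right_mono)
    also have "\<dots> < e^2" using that L0 by (simp add: field_simps)
    finally have "sqrt (L * \<bar>y - x\<bar>) < sqrt (e^2)" by (simp only: real_sqrt_less_iff)
    thus ?thesis using that by simp
  qed
  have zb_cont: "continuous_on {0..1} zb"
    unfolding continuous_on_iff
  proof (intro ballI allI impI)
    fix x e :: real assume x: "x \<in> {0..1}" and e: "e > 0"
    show "\<exists>d>0. \<forall>x'\<in>{0..1}. dist x' x < d \<longrightarrow> dist (zb x') (zb x) < e"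
    proof (intro exI[of _ "e^2 / (L + 1)"] conjI ballI impI)
      show "e^2 / (L + 1) > 0" using e L0 by simp
      fix x' assume x': "x' \<in> {0..1}" and d: "dist x' x < e^2 / (L + 1)"
      show "dist (zb x') (zb x) < e"
        using zbmod[OF x x'] small[OF e, of x' x] d by (simp add: dist_real_def)
    qed
  qed
  have unif: "uniform_limit {0..1} z zb sequentially"
    unfolding uniform_limit_iff
  proof (intro allI impI)
    fix e :: real assume e: "e > 0"
    obtain K0 :: nat where K0: "L / (e/3)^2 < real K0" using reals_Archimedean2 by blast
    define K where "K = Suc K0"
    have Kpos: "real K > 0" unfolding K_def by simp
    have LK: "L / real K < (e/3)^2"
    proof -
      have "L / (e/3)^2 < real K" using K0 unfolding K_def by simp
      thus ?thesis using Kpos e by (simp add: field_simps)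
    qed
    have ev: "\<forall>\<^sub>F n in sequentially. \<forall>i\<in>{..K}. dist (z n (real i / real K)) (zb (real i / real K)) < e/3"
    proof (rule eventually_ball_finite)
      show "\<forall>i\<in>{..K}. \<forall>\<^sub>F n in sequentially. dist (z n (real i / real K)) (zb (real i / real K)) < e/3"
      proof
        fix i assume "i \<in> {..K}"
        hence "real i / real K \<in> {0..1}" using Kpos by (auto simp: field_simps)
        from conv[OF this] show "\<forall>\<^sub>F n in sequentially. dist (z n (real i / real K)) (zb (real i / real K)) < e/3"
          using e unfolding tendsto_iff by (meson divide_pos_pos zero_less_numeral)
      qed
    qed simp
    show "\<forall>\<^sub>F n in sequentially. \<forall>x\<in>{0..1}. dist (z n x) (zb x) < e"
      using ev
    proof eventually_elim
      case (elim n)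
      show ?case
      proof
        fix x :: real assume x: "x \<in> {0..1}"
        define i where "i = nat \<lfloor>x * real K\<rfloor>"
        have xK: "0 \<le> x * real K" "x * real K \<le> real K" using x Kpos by auto
        have i1: "real i \<le> x * real K" "x * real K < real i + 1"
          unfolding i_def using xK(1) by linarith+
        have iK: "i \<in> {..K}" using i1(1) xK(2) by simp
        define p where "p = real i / real K"
        have p01: "p \<in> {0..1}" using iK Kpos unfolding p_def by (auto simp: field_simps)
        have xp: "x - p = (x * real K - real i) / real K" unfolding p_def using Kpos by (simp add: field_simps)
        have dp: "\<bar>x - p\<bar> \<le> 1 / real K"
          unfolding xp using i1 Kpos by (auto simp: divide_right_mono)
        have sq: "sqrt (L * \<bar>x - p\<bar>) < e/3"
        proof -
          have "L * \<bar>x - p\<bar> \<le> L * (1 / real K)" using dp L0 by (rule mult_left_mono)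
          also have "\<dots> < (e/3)^2" using LK by simp
          finally have "sqrt (L * \<bar>x - p\<bar>) < sqrt ((e/3)^2)" by (simp only: real_sqrt_less_iff)
          thus ?thesis using e by simp
        qed
        have "\<bar>z n x - zb x\<bar> \<le> \<bar>z n x - z n p\<bar> + \<bar>z n p - zb p\<bar> + \<bar>zb p - zb x\<bar>" by linarith
        moreover have "\<bar>z n x - z n p\<bar> < e/3" using zmod[OF p01 x, of n] sq by linarith
        moreover have "\<bar>zb p - zb x\<bar> < e/3" using zbmod[OF x p01] sq by (simp add: abs_minus_commute)
        moreover have "\<bar>z n p - zb p\<bar> < e/3" using elim iK unfolding p_def by (auto simp: dist_real_def)
        ultimately show "dist (z n x) (zb x) < e" by (simp add: dist_real_def)
      qed
    qed
  qed
  have zb_up: "zb x \<le> up x" if "x \<in> {0..1}" for x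
    by (rule LIMSEQ_le_const2[OF conv[OF that]]) (use bnds[OF that] in auto)
  have zb_neg: "zb x < 0" if "x \<in> {0<..<1}" for x
    using zb_up[of x] up_neg[OF that] that by auto
  have zb_ode: "(zb has_real_derivative (h x - c0 - q x / zb x)) (at x)"
    if x: "x \<in> {0<..<1}" for x
  proof -
    define a where "a = x / 2"
    define b where "b = (1 + x) / 2"
    have ab: "{a..b} \<subseteq> {0<..<1}" "a < x" "x < b" "a \<le> b" using x unfolding a_def b_def by auto
    have ab01: "{a..b} \<subseteq> {0..1}" using ab(1) by auto
    obtain t0 where t0: "t0 \<in> {a..b}" "\<And>y. y \<in> {a..b} \<Longrightarrow> - up t0 \<le> - up y"
      using continuous_attains_inf[of "{a..b}" "\<lambda>y. - up y"] ab(4)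
        continuous_on_minus[OF continuous_on_subset[OF up_c ab01]] by auto
    define \<eta> where "\<eta> = - up t0"
    have eta: "\<eta> > 0" unfolding \<eta>_def using up_neg[of t0] t0(1) ab(1) by auto
    have zn_eta: "\<eta> \<le> \<bar>z n y\<bar>" if "y \<in> {a..b}" for n y
      using t0(2)[OF that] bnds[of y n] that ab01 unfolding \<eta>_def by auto
    have zb_eta: "\<eta> \<le> \<bar>zb y\<bar>" if "y \<in> {a..b}" for y
      using t0(2)[OF that] zb_up[of y] that ab01 unfolding \<eta>_def by auto
    have qdiff: "\<bar>q y / z n y - q y / zb y\<bar> \<le> Q * \<bar>z n y - zb y\<bar> / \<eta>^2"
      if y: "y \<in> {a..b}" for n y
    proof -
      have nz: "z n y \<noteq> 0" "zb y \<noteq> 0" using zn_eta[OF y, of n] zb_eta[OF y] eta by auto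
      have "\<bar>q y / z n y - q y / zb y\<bar> = \<bar>q y\<bar> * \<bar>z n y - zb y\<bar> / (\<bar>z n y\<bar> * \<bar>zb y\<bar>)"
      proof -
        have "q y / z n y - q y / zb y = q y * (zb y - z n y) / (z n y * zb y)"
          using nz by (simp add: field_simps)
        thus ?thesis by (simp add: abs_mult abs_minus_commute)
      qed
      also have "\<dots> \<le> \<bar>q y\<bar> * \<bar>z n y - zb y\<bar> / \<eta>^2"
      proof (rule divide_left_mono)
        show "\<eta>^2 \<le> \<bar>z n y\<bar> * \<bar>zb y\<bar>" unfolding power2_eq_square
          using zn_eta[OF y, of n] zb_eta[OF y] eta by (intro mult_mono) auto
      qed (use eta nz in auto)
      also have "\<dots> \<le> Q * \<bar>z n y - zb y\<bar> / \<eta>^2"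
        using Q(2)[of y] y ab01 eta by (intro divide_right_mono mult_right_mono) auto
      finally show ?thesis .
    qed
    define S where "S = {a<..<b}"
    have S: "convex S" "open S" "x \<in> S" "S \<subseteq> {a..b}" unfolding S_def using ab by auto
    have S01: "S \<subseteq> {0<..<1}" using S(4) ab(1) by auto
    have "\<exists>g. \<forall>y\<in>S. (\<lambda>n. z n y) \<longlonglongrightarrow> g y \<and>
            (g has_field_derivative (h y - c0 - q y / zb y)) (at y within S)"
    proof (rule has_real_derivative_sequence[OF S(1)])
      show "(z n has_field_derivative (h y - c n - q y / z n y)) (at y within S)" if "y \<in> S" for n y
        using z_ode[of y n] S01 that by (metis subsetD has_field_derivative_at_within)
      show "\<exists>y l. y \<in> S \<and> (\<lambda>n. z n y) \<longlonglongrightarrow> l" using S(3) S01 conv[of x] x by auto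
      fix e :: real assume e: "e > 0"
      obtain N1 where N1: "\<And>n. n \<ge> N1 \<Longrightarrow> \<bar>c n - c0\<bar> < e/2"
        using c_lim e unfolding lim_sequentially dist_real_def by (meson half_gt_zero)
      have e2: "e * \<eta>^2 / (2 * (Q + 1)) > 0" using e eta Q(1) by simp
      obtain N2 where N2: "\<And>n y. n \<ge> N2 \<Longrightarrow> y \<in> {0..1} \<Longrightarrow> \<bar>z n y - zb y\<bar> < e * \<eta>^2 / (2 * (Q + 1))"
        using unif e2 unfolding uniform_limit_iff dist_real_def eventually_sequentially by blast
      show "\<exists>N. \<forall>n y. n \<ge> N \<longrightarrow> y \<in> S \<longrightarrow>
              norm ((h y - c n - q y / z n y) - (h y - c0 - q y / zb y)) \<le> e"
      proof (intro exI[of _ "max N1 N2"] allI impI)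
        fix n y assume n: "max N1 N2 \<le> n" and y: "y \<in> S"
        have yab: "y \<in> {a..b}" using y S(4) by auto
        have "Q * \<bar>z n y - zb y\<bar> / \<eta>^2 \<le> Q * (e * \<eta>^2 / (2 * (Q + 1))) / \<eta>^2"
          using N2[of n y] n yab ab01 Q(1) eta by (intro divide_right_mono mult_left_mono) auto
        also have "\<dots> = e / 2 * (Q / (Q + 1))"
        proof -
          have "Q + 1 \<noteq> 0" "\<eta>^2 \<noteq> 0" using eta Q(1) by auto
          thus ?thesis by (simp add: power2_eq_square)
        qed
        also have "\<dots> \<le> e / 2"
        proof -
          have "Q / (Q + 1) \<le> 1" using Q(1) by simp
          thus ?thesis using e by (intro mult_left_le) auto
        qed
        finally have t2: "Q * \<bar>z n y - zb y\<bar> / \<eta>^2 \<le> e / 2" .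
        have "norm ((h y - c n - q y / z n y) - (h y - c0 - q y / zb y))
              \<le> \<bar>c n - c0\<bar> + \<bar>q y / z n y - q y / zb y\<bar>" by simp
        also have "\<dots> \<le> e" using N1[of n] n qdiff[OF yab, of n] t2 by linarith
        finally show "norm ((h y - c n - q y / z n y) - (h y - c0 - q y / zb y)) \<le> e" .
      qed
    qed
    then obtain g where g: "\<And>y. y \<in> S \<Longrightarrow> (\<lambda>n. z n y) \<longlonglongrightarrow> g y"
      "\<And>y. y \<in> S \<Longrightarrow> (g has_field_derivative (h y - c0 - q y / zb y)) (at y within S)" by blast
    have gzb: "g y = zb y" if "y \<in> S" for y
      using LIMSEQ_unique[OF g(1)[OF that] conv] that S01 by auto
    have "(g has_field_derivative (h x - c0 - q x / zb x)) (at x)"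
      using g(2)[OF S(3)] at_within_open[OF S(3,2)] by simp
    thus ?thesis by (rule has_field_derivative_transform_within_open[OF _ S(2,3)]) (rule gzb)
  qed
  have deriv_zb: "deriv zb x = h x - c0 - q x / zb x" if "x \<in> {0<..<1}" for x
    using DERIV_imp_deriv[OF zb_ode[OF that]] .
  have s01: "{0<..<1::real} \<subseteq> {0..1}" by auto
  have "continuous_on {0<..<1} (\<lambda>x. h x - c0 - q x / zb x)"
    by (intro continuous_intros continuous_on_subset[OF h_cont s01] continuous_on_subset[OF q_cont s01]
        continuous_on_subset[OF zb_cont s01]) (use zb_neg in fastforce)
  moreover have "continuous_on {0<..<1} (deriv zb) = continuous_on {0<..<1} (\<lambda>x. h x - c0 - q x / zb x)"
    by (rule continuous_on_cong[OF refl]) (rule deriv_zb)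
  ultimately have dcont: "continuous_on {0<..<1} (deriv zb)" by simp
  have diff: "zb differentiable_on {0<..<1}"
    unfolding differentiable_on_def
  proof
    fix x :: real assume x: "x \<in> {0<..<1}"
    have "(zb has_real_derivative (h x - c0 - q x / zb x)) (at x within {0<..<1})"
      by (rule has_field_derivative_at_within[OF zb_ode[OF x]])
    thus "zb differentiable at x within {0<..<1}" unfolding real_differentiable_def by (rule exI)
  qed
  show ?thesis
    by (rule exI[of _ zb], intro conjI ballI unif zb_cont diff dcont zb_ode zb_neg)
qed
end
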